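(* Let $d\ge1$, $K\subset\mathbb{R}^d$ compact convex with volume one, and let $\mu_t$ be either a homogeneous Poisson process of intensity $t$ on $K$ (in which case $\chi(t):=t^2$, $\widetilde\chi(t):=t^3$) or a binomial process of $\lceil t\rceil$ independent uniform points in $K$ (in which case $\chi(t):=\lceil t\rceil(\lceil t\rceil-1)$, $\widetilde\chi(t):=\lceil t\rceil^3$), $t\ge1$. There is a constant $C_K>0$ depending only on $d$ and $K$ such that $$\Big|\frac12\mathbb{E}\sum_{(x,y)\in\mu^2_{t,\neq}}\mathbf{1}\big((x+y)/2\in B,\ \|x-y\|\in\tilde A\big)-\frac{\kappa_d}{2}\mathrm{vol}(B)\,t^2d\int_0^\infty\mathbf{1}(r\in\tilde A)r^{d-1}\,dr\Big|\le 2C_K\kappa_dt^2(\tilde a^{d+1}+\tilde a^{2d})+\frac{\kappa_d}{2}t\tilde a^d$$ for all Borel sets $B\subset K$ and $\tilde A\subset[0,\tilde a]$ with $\tilde a>0$. Moreover, $$\widetilde\chi(t)\int_K\Big(\int_K\mathbf{1}\big((x+y)/2\in B,\ \|x-y\|\le u\big)\,dx\Big)^2dy\le 8t^3\kappa_d^2u^{2d}$$ for all Borel sets $B\subset K$ and $u\ge0$.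
   Context: $\kappa_d$ is the volume of the $d$-dimensional unit ball; $\mathrm{vol}$ is Lebesgue measure; $\mu^2_{t,\neq}$ the pairs of distinct points of $\mu_t$. *)

theory Defs
  imports "HOL-Analysis.Analysis"
begin

datatype point_process = Poisson_proc | Binomial_proc

definition binomial_pair_mean ::
  "'a::euclidean_space set \<Rightarrow> nat \<Rightarrow> ('a \<Rightarrow> 'a \<Rightarrow> real) \<Rightarrow> real" where
  "binomial_pair_mean K n f =
     (\<integral>xs. (\<Sum>i<n. \<Sum>j\<in>{..<n} - {i}. f (xs i) (xs j))
        \<partial>(PiM {..<n} (\<lambda>_. uniform_measure lborel K)))"

text \<open>Poisson process of intensity t on K (vol K = 1), realised as a mixed
binomial process with a Poisson(t) number of independent uniform points.\<close>
definition poisson_pair_mean ::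
  "'a::euclidean_space set \<Rightarrow> real \<Rightarrow> ('a \<Rightarrow> 'a \<Rightarrow> real) \<Rightarrow> real" where
  "poisson_pair_mean K t f =
     (\<Sum>n. exp (- t) * t ^ n / fact n * binomial_pair_mean K n f)"

definition pair_mean ::
  "point_process \<Rightarrow> 'a::euclidean_space set \<Rightarrow> real \<Rightarrow> ('a \<Rightarrow> 'a \<Rightarrow> real) \<Rightarrow> real" where
  "pair_mean p K t f = (case p of
      Poisson_proc \<Rightarrow> poisson_pair_mean K t f
    | Binomial_proc \<Rightarrow> binomial_pair_mean K (nat \<lceil>t\<rceil>) f)"

definition chi_tilde :: "point_process \<Rightarrow> real \<Rightarrow> real" where
  "chi_tilde p t = (case p of Poisson_proc \<Rightarrow> t ^ 3 | Binomial_proc \<Rightarrow> real (nat \<lceil>t\<rceil>) ^ 3)"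

end

theory Submission
  imports Defs "HOL-Probability.Probability"
begin



lemma geo:
  fixes K :: "'a::euclidean_space set"
  assumes cK: "compact K" and cvx: "convex K" and mK: "measure lborel K = 1"
  obtains D where "D > 0" "\<And>v. emeasure lborel (K - (+) v ` K) \<le> ennreal (D * norm v)"
proof -
  have Kb: "K \<in> sets borel" using cK by (simp add: borel_compact)
  have "interior K \<noteq> {}"
  proof
    assume "interior K = {}"
    then have "negligible K" using cvx negligible_convex_interior by blast
    then have "measure lebesgue K = 0" using negligible_iff_measure by blast
    with Kb mK show False by simp
  qed
  then obtain c where "c \<in> interior K" by blast
  then obtain e where e: "e > 0" "ball c e \<subseteq> K" using mem_interior by blast
  define \<rho> where "\<rho> = e / 2"
  have rho: "\<rho> > 0" "cball c \<rho> \<subseteq> K" using e by (auto simp: \<rho>_def)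
  have cK': "c \<in> K" using rho by auto
  define D where "D = real DIM('a) / \<rho>"
  have D: "D > 0" using rho by (simp add: D_def)
  have fin: "emeasure lborel K = 1" using mK Kb
    using emeasure_compact_finite[OF cK] by (simp add: emeasure_eq_ennreal_measure)
  show ?thesis
  proof (rule that[OF D])
    fix v :: 'a
    have vb: "(+) v ` K \<in> sets borel"
      using cK by (intro borel_compact compact_translation) 
    show "emeasure lborel (K - (+) v ` K) \<le> ennreal (D * norm v)"
    proof (cases "norm v \<ge> \<rho>")
      case True
      have "emeasure lborel (K - (+) v ` K) \<le> emeasure lborel K"
        using Kb vb by (intro emeasure_mono) auto
      also have "\<dots> = ennreal 1" using fin by simp
      also have "\<dots> \<le> ennreal (D * norm v)"
      proof (intro ennreal_leI)
        have "1 \<le> real DIM('a)" by (simp add: DIM_positive Suc_le_eq)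
        also have "\<dots> \<le> D * norm v" using True rho by (simp add: D_def field_simps)
        finally show "1 \<le> D * norm v" .
      qed
      finally show ?thesis .
    next
      case False
      show ?thesis
      proof (cases "v = 0")
        case True then show ?thesis by simp
      next
        case v0: False
        define l where "l = 1 - norm v / \<rho>"
        have l: "0 < l" "l \<le> 1" using False rho by (auto simp: l_def field_simps)
        define H where "H = (\<lambda>x. l *\<^sub>R x + (1 - l) *\<^sub>R c) ` K"
        have Hb: "H \<in> sets borel" unfolding H_def
          using cK by (intro borel_compact compact_continuous_image continuous_intros)
        have HK: "H \<subseteq> K"
          unfolding H_def using l cK' cvx by (auto intro!: convexD)
        have Hv: "H \<subseteq> (+) v ` K"
        proof
          fix h assume "h \<in> H"
          then obtain k where k: "k \<in> K" "h = l *\<^sub>R k + (1 - l) *\<^sub>R c" by (auto simp: H_def)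
          define w where "w = c - (\<rho> / norm v) *\<^sub>R v"
          have "w \<in> cball c \<rho>" using rho by (simp add: w_def dist_norm)
          then have wK: "w \<in> K" using rho by auto
          have "h - v = l *\<^sub>R k + (1 - l) *\<^sub>R w"
            using v0 rho by (simp add: k w_def l_def algebra_simps)
          also have "\<dots> \<in> K" using l k wK cvx by (intro convexD) auto
          finally have "h - v \<in> K" .
          then show "h \<in> (+) v ` K" by (intro image_eqI[of _ _ "h - v"]) auto
        qed
        have mH: "measure lborel H = l ^ DIM('a)"
        proof -
          have "measure lebesgue H = \<bar>l\<bar> ^ DIM('a) * measure lebesgue K"
            unfolding H_def using measure_lebesgue_affine[of l "(1 - l) *\<^sub>R c" K] by simp
          then show ?thesis using Hb Kb mK l by simp
        qed
        have "emeasure lborel (K - (+) v ` K) \<le> emeasure lborel (K - H)"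
          using Kb vb Hb Hv by (intro emeasure_mono) auto
        also have "\<dots> = emeasure lborel K - emeasure lborel H"
        proof (rule emeasure_Diff)
          have "emeasure lborel H \<le> emeasure lborel K" using HK Kb by (intro emeasure_mono) auto
          then show "emeasure lborel H \<noteq> \<infinity>" using fin by (auto simp: top_unique)
        qed (use Hb HK Kb in auto)
        also have "\<dots> = ennreal (1 - l ^ DIM('a))"
        proof -
          have "emeasure lborel H \<le> emeasure lborel K" using HK Kb by (intro emeasure_mono) auto
          then have "emeasure lborel H = ennreal (measure lborel H)"
            using fin by (intro emeasure_eq_ennreal_measure) (auto simp: top_unique)
          then show ?thesis using fin mH l by (simp add: ennreal_minus ennreal_1[symmetric] del: ennreal_1)
        qed
        also have "\<dots> \<le> ennreal (D * norm v)"
        proof (intro ennreal_leI)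
          have "1 + real DIM('a) * (- (norm v / \<rho>)) \<le> (1 + (- (norm v / \<rho>))) ^ DIM('a)"
            using l by (intro Bernoulli_inequality) (simp add: l_def)
          then show "1 - l ^ DIM('a) \<le> D * norm v" by (simp add: l_def D_def)
        qed
        finally show ?thesis .
      qed
    qed
  qed
qed



lemma polar:
  fixes A :: "real set" and a :: real
  assumes Ab[measurable]: "A \<in> sets borel" and Aa: "A \<subseteq> {0..a}" and a: "a \<ge> 0"
  shows "(\<integral>\<^sup>+ z. indicator A (norm z) \<partial>(lborel::'a::euclidean_space measure)) =
    ennreal (unit_ball_vol DIM('a) * DIM('a)) * (\<integral>\<^sup>+ r. ennreal (indicator A r * r ^ (DIM('a) - 1)) \<partial>lborel)"
proof -
  define k where "k = unit_ball_vol (real DIM('a))"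
  define d where "d = DIM('a)"
  have k: "k > 0" by (simp add: k_def)
  have d: "d \<ge> 1" by (simp add: d_def DIM_positive Suc_le_eq)
  define F where "F r = k * r ^ d" for r :: real
  define g where "g r = k * d * r ^ (d - 1)" for r :: real
  have Fd: "DERIV F r :> g r" for r
    unfolding F_def g_def using d
    by (auto intro!: derivative_eq_intros simp: algebra_simps)
  have gm[measurable]: "g \<in> borel_measurable borel" unfolding g_def by measurable
  have FTC: "(\<integral>\<^sup>+ r. ennreal (g r) * indicator {x..a} r \<partial>lborel) = ennreal (F a - F x)" if "0 \<le> x" "x \<le> a" for x
    using that by (intro nn_integral_FTC_Icc[OF gm Fd]) (auto simp: g_def k_def)
  have cb: "emeasure lborel (cball (0::'a) r) = ennreal (F r)" if "r \<ge> 0" for r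
    using emeasure_cball[OF that, of 0] by (simp add: F_def k_def d_def)
  define M1 where "M1 = distr (density (lborel::'a measure) (indicator (cball 0 a))) borel norm"
  define M2 where "M2 = density lborel (\<lambda>r. ennreal (indicator {0..a} r * g r))"
  have M12: "M1 = M2"
  proof (rule measure_eqI_lessThan)
    show "sets M1 = sets borel" "sets M2 = sets borel" by (simp_all add: M1_def M2_def)
    have e1: "emeasure M1 {x<..} = emeasure lborel (cball (0::'a) a \<inter> {z. x < norm z})" for x
    proof -
      have "emeasure M1 {x<..} = (\<integral>\<^sup>+ z. indicator (cball (0::'a) a) z * indicator (norm -` {x<..}) z \<partial>lborel)"
      proof -
        have "norm -` {x<..} \<in> sets (lborel::'a measure)"
        proof -
          have "open (norm -` {x<..} :: 'a set)"
            by (intro continuous_open_vimage) (auto intro: continuous_intros)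
          then show ?thesis by (simp add: borel_open)
        qed
        then show ?thesis unfolding M1_def
          by (simp add: emeasure_distr) (subst emeasure_density, auto intro: borel_measurable_indicator borel_closed)
      qed
      also have "\<dots> = (\<integral>\<^sup>+ z. indicator (cball (0::'a) a \<inter> {z. x < norm z}) z \<partial>lborel)"
        by (intro nn_integral_cong) (auto split: split_indicator)
      finally show ?thesis by simp
    qed
    have e2: "emeasure M2 {x<..} = (\<integral>\<^sup>+ r. ennreal (g r) * indicator ({0..a} \<inter> {x<..}) r \<partial>lborel)" for x
      unfolding M2_def by (simp add: emeasure_density) (intro nn_integral_cong, auto split: split_indicator)
    have val: "emeasure M1 {x<..} = emeasure M2 {x<..} \<and> emeasure M1 {x<..} < \<infinity>" for x
    proof (cases "x < 0")
      case True
      then have "cball (0::'a) a \<inter> {z. x < norm z} = cball 0 a" by (auto, meson less_le_trans norm_ge_zero)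
      then have "emeasure M1 {x<..} = ennreal (F a)" using e1 cb a by simp
      moreover have "emeasure M2 {x<..} = ennreal (F a)"
      proof -
        have "{0..a} \<inter> {x<..} = {0..a}" using True by auto
        then show ?thesis using e2[of x] FTC[of 0] a d by (simp add: F_def zero_power)
      qed
      ultimately show ?thesis by simp
    next
      case False
      show ?thesis
      proof (cases "x \<le> a")
        case True
        have "cball (0::'a) a \<inter> {z. x < norm z} = cball 0 a - cball 0 x" by auto
        then have "emeasure M1 {x<..} = emeasure lborel (cball (0::'a) a - cball 0 x)"
          using e1 by simp
        also have "\<dots> = emeasure lborel (cball (0::'a) a) - emeasure lborel (cball (0::'a) x)"
          using True False cb[of x] by (intro emeasure_Diff) auto
        also have "\<dots> = ennreal (F a - F x)" using cb[of a] cb[of x] a True False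
          by (simp add: F_def) (rule ennreal_minus, use k False in simp)
        finally have 1: "emeasure M1 {x<..} = ennreal (F a - F x)" .
        have "emeasure M2 {x<..} = (\<integral>\<^sup>+ r. ennreal (g r) * indicator {x..a} r \<partial>lborel)"
          unfolding e2
        proof (intro nn_integral_cong_AE)
          show "AE r in lborel. ennreal (g r) * indicator ({0..a} \<inter> {x<..}) r = ennreal (g r) * indicator {x..a} r"
            using AE_lborel_singleton[of x] by eventually_elim (use False in \<open>auto split: split_indicator\<close>)
        qed
        also have "\<dots> = ennreal (F a - F x)" using FTC[of x] True False by simp
        finally show ?thesis using 1 by simp
      next
        case False2: False
        have "cball (0::'a) a \<inter> {z. x < norm z} = {}" using False2 by auto
        moreover have "{0..a} \<inter> {x<..} = {}" using False2 by auto
        ultimately show ?thesis using e1 e2 by simp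
      qed
    qed
    show "emeasure M1 {x<..} < \<infinity>" for x using val by blast
    show "emeasure M1 {x<..} = emeasure M2 {x<..}" for x using val by blast
  qed
  have "(\<integral>\<^sup>+ r. indicator A r \<partial>M1) = (\<integral>\<^sup>+ z. indicator A (norm z) \<partial>(lborel::'a measure))"
  proof -
    have "(\<integral>\<^sup>+ r. indicator A r \<partial>M1) = (\<integral>\<^sup>+ z. indicator (cball (0::'a) a) z * indicator A (norm z) \<partial>lborel)"
      unfolding M1_def by (subst nn_integral_distr, simp, simp, subst nn_integral_density, auto intro: borel_measurable_indicator borel_closed)
    also have "\<dots> = (\<integral>\<^sup>+ z. indicator A (norm z) \<partial>(lborel::'a measure))"
      using Aa by (intro nn_integral_cong) (auto split: split_indicator)
    finally show ?thesis .
  qed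
  moreover have "(\<integral>\<^sup>+ r. indicator A r \<partial>M2) = ennreal (k * d) * (\<integral>\<^sup>+ r. ennreal (indicator A r * r ^ (d - 1)) \<partial>lborel)"
  proof -
    have "(\<integral>\<^sup>+ r. indicator A r \<partial>M2) = (\<integral>\<^sup>+ r. ennreal (indicator {0..a} r * g r) * indicator A r \<partial>lborel)"
      unfolding M2_def by (subst nn_integral_density) auto
    also have "\<dots> = (\<integral>\<^sup>+ r. ennreal (k * d) * ennreal (indicator A r * r ^ (d - 1)) \<partial>lborel)"
      using Aa k by (intro nn_integral_cong) (auto split: split_indicator simp: g_def ennreal_mult[symmetric] mult.assoc)
    also have "\<dots> = ennreal (k * d) * (\<integral>\<^sup>+ r. ennreal (indicator A r * r ^ (d - 1)) \<partial>lborel)"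
      by (intro nn_integral_cmult) measurable
    finally show ?thesis .
  qed
  ultimately show ?thesis using M12 by (simp add: k_def d_def)
qed



lemma half_half: "(1/2) *\<^sub>R w + (1/2) *\<^sub>R w = (w::'a::real_vector)"
  by (simp add: scaleR_left_distrib[symmetric])
lemma mid1: "(1/2) *\<^sub>R (m - (1/2) *\<^sub>R w + (m - (1/2) *\<^sub>R w + w)) = (m::'a::euclidean_space)"
proof -
  have "m - (1/2) *\<^sub>R w + (m - (1/2) *\<^sub>R w + w) = 2 *\<^sub>R m" by (simp add: algebra_simps scaleR_2 half_half)
  then show ?thesis by simp
qed
lemma mid2: "m - (1/2) *\<^sub>R w + w = m + (1/2) *\<^sub>R (w::'a::euclidean_space)"
proof -
  have "(1 - 1/2) *\<^sub>R w = w - (1/2) *\<^sub>R w" by (simp only: scaleR_diff_left scaleR_one)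
  then have "w - (1/2) *\<^sub>R w = (1/2) *\<^sub>R w" by simp
  then show ?thesis by (simp add: algebra_simps)
qed
lemma mid3: "(1/2) *\<^sub>R (m - (1/2) *\<^sub>R w + (m + (1/2) *\<^sub>R w)) = (m::'a::euclidean_space)"
proof -
  have "m - (1/2) *\<^sub>R w + (m + (1/2) *\<^sub>R w) = 2 *\<^sub>R m" by (simp add: algebra_simps scaleR_2)
  then show ?thesis by simp
qed

lemma Jrep:
  fixes K B :: "'a::euclidean_space set" and A :: "real set"
  assumes Kb[measurable]: "K \<in> sets borel" and eK: "emeasure lborel K = 1"
    and Bb[measurable]: "B \<in> sets borel" and Ab[measurable]: "A \<in> sets borel"
  shows "(\<integral>\<^sup>+ z. ennreal (indicator B ((fst z + snd z) /\<^sub>R 2) * indicator A (norm (fst z - snd z)))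
       \<partial>(uniform_measure lborel K \<Otimes>\<^sub>M uniform_measure lborel K)) =
    (\<integral>\<^sup>+ w. \<integral>\<^sup>+ m. indicator A (norm w) * indicator B m * indicator K (m - w /\<^sub>R 2) * indicator K (m + w /\<^sub>R 2) \<partial>lborel \<partial>lborel)"
proof -
  define U where "U = uniform_measure lborel K"
  interpret U: prob_space U unfolding U_def using eK by (intro prob_space_uniform_measure) auto
  define f where "f x y = ennreal (indicator B ((x + y) /\<^sub>R 2) * indicator A (norm (x - y)))" for x y :: 'a
  have fm[measurable]: "case_prod f \<in> borel_measurable (lborel \<Otimes>\<^sub>M lborel)"
    unfolding f_def by measurable
  have sU: "sets U = sets lborel" by (simp add: U_def)
  have "(\<integral>\<^sup>+ z. f (fst z) (snd z) \<partial>(U \<Otimes>\<^sub>M U)) = (\<integral>\<^sup>+ x. \<integral>\<^sup>+ y. f x y \<partial>U \<partial>U)"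
  proof -
    have "case_prod f \<in> borel_measurable (U \<Otimes>\<^sub>M U)"
      using fm by (simp add: measurable_cong_sets[OF sets_pair_measure_cong[OF sU sU] refl])
    then show ?thesis using U.nn_integral_fst[of "case_prod f" U] by (simp add: case_prod_beta')
  qed
  also have "\<dots> = (\<integral>\<^sup>+ x. \<integral>\<^sup>+ y. f x y * indicator K y * indicator K x \<partial>lborel \<partial>lborel)"
  proof -
    have "(\<integral>\<^sup>+ y. f x y \<partial>U) = (\<integral>\<^sup>+ y. f x y * indicator K y \<partial>lborel)" for x
      unfolding U_def by (subst nn_integral_uniform_measure) (auto simp: eK f_def divide_ennreal_def)
    then have "(\<integral>\<^sup>+ x. \<integral>\<^sup>+ y. f x y \<partial>U \<partial>U) = (\<integral>\<^sup>+ x. (\<integral>\<^sup>+ y. f x y * indicator K y \<partial>lborel) \<partial>U)"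
      by simp
    also have "\<dots> = (\<integral>\<^sup>+ x. (\<integral>\<^sup>+ y. f x y * indicator K y \<partial>lborel) * indicator K x \<partial>lborel)"
    proof -
      have "(\<lambda>x. \<integral>\<^sup>+ y. f x y * indicator K y \<partial>lborel) \<in> borel_measurable lborel"
        unfolding f_def by measurable
      then show ?thesis unfolding U_def by (subst nn_integral_uniform_measure) (auto simp: eK divide_ennreal_def)
    qed
    also have "\<dots> = (\<integral>\<^sup>+ x. \<integral>\<^sup>+ y. f x y * indicator K y * indicator K x \<partial>lborel \<partial>lborel)"
      by (intro nn_integral_cong nn_integral_multc[symmetric]) (auto simp: f_def)
    finally show ?thesis by (simp add: U_def)
  qed
  also have "\<dots> = (\<integral>\<^sup>+ x. \<integral>\<^sup>+ w. f x (x + w) * indicator K (x + w) * indicator K x \<partial>lborel \<partial>lborel)"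
  proof (rule nn_integral_cong)
    fix x :: 'a
    have "(\<integral>\<^sup>+ y. f x y * indicator K y * indicator K x \<partial>lborel) =
       (\<integral>\<^sup>+ y. f x y * indicator K y * indicator K x \<partial>distr lborel borel ((+) x))"
      by (simp add: lborel_distr_plus)
    also have "\<dots> = (\<integral>\<^sup>+ w. f x (x + w) * indicator K (x + w) * indicator K x \<partial>lborel)"
      by (subst nn_integral_distr) (auto simp: f_def)
    finally show "(\<integral>\<^sup>+ y. f x y * indicator K y * indicator K x \<partial>lborel) =
       (\<integral>\<^sup>+ w. f x (x + w) * indicator K (x + w) * indicator K x \<partial>lborel)" .
  qed
  also have "\<dots> = (\<integral>\<^sup>+ w. \<integral>\<^sup>+ x. f x (x + w) * indicator K (x + w) * indicator K x \<partial>lborel \<partial>lborel)"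
    by (intro lborel_pair.Fubini'[symmetric]) (simp add: f_def)
  also have "\<dots> = (\<integral>\<^sup>+ w. \<integral>\<^sup>+ m. indicator A (norm w) * indicator B m * indicator K (m - w /\<^sub>R 2) * indicator K (m + w /\<^sub>R 2) \<partial>lborel \<partial>lborel)"
  proof (rule nn_integral_cong)
    fix w :: 'a
    have "(\<integral>\<^sup>+ x. f x (x + w) * indicator K (x + w) * indicator K x \<partial>lborel) =
       (\<integral>\<^sup>+ x. f x (x + w) * indicator K (x + w) * indicator K x \<partial>distr lborel borel ((+) (- w /\<^sub>R 2)))"
      by (simp add: lborel_distr_plus)
    also have "\<dots> = (\<integral>\<^sup>+ m. f (- w /\<^sub>R 2 + m) (- w /\<^sub>R 2 + m + w) * indicator K (- w /\<^sub>R 2 + m + w) * indicator K (- w /\<^sub>R 2 + m) \<partial>lborel)"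
      by (subst nn_integral_distr) (auto simp: f_def)
    also have "\<dots> = (\<integral>\<^sup>+ m. indicator A (norm w) * indicator B m * indicator K (m - w /\<^sub>R 2) * indicator K (m + w /\<^sub>R 2) \<partial>lborel)"
    proof (rule nn_integral_cong)
      fix m :: 'a
      have 1: "(- w /\<^sub>R 2 + m + (- w /\<^sub>R 2 + m + w)) /\<^sub>R 2 = m"
        by (simp add: algebra_simps scaleR_2[symmetric] del: scaleR_2)
      have 2: "- w /\<^sub>R 2 + m + w = m + w /\<^sub>R 2"
        by (simp add: algebra_simps scaleR_2[symmetric] del: scaleR_2)
      have 3: "- w /\<^sub>R 2 + m = m - w /\<^sub>R 2" by simp
      show "f (- w /\<^sub>R 2 + m) (- w /\<^sub>R 2 + m + w) * indicator K (- w /\<^sub>R 2 + m + w) * indicator K (- w /\<^sub>R 2 + m) =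
        indicator A (norm w) * indicator B m * indicator K (m - w /\<^sub>R 2) * indicator K (m + w /\<^sub>R 2)"
        unfolding f_def by (simp add: ennreal_mult' norm_minus_commute mult_ac mid1 mid2 mid3 half_half split: split_indicator)
    qed
    finally show "(\<integral>\<^sup>+ x. f x (x + w) * indicator K (x + w) * indicator K x \<partial>lborel) =
       (\<integral>\<^sup>+ m. indicator A (norm w) * indicator B m * indicator K (m - w /\<^sub>R 2) * indicator K (m + w /\<^sub>R 2) \<partial>lborel)" .
  qed
  finally show ?thesis by (simp add: U_def f_def)
qed



lemma pair_distr_PiM:
  assumes M: "prob_space M" and ij: "i \<in> I" "j \<in> I" "i \<noteq> j"
  shows "distr (PiM I (\<lambda>_. M)) (M \<Otimes>\<^sub>M M) (\<lambda>\<omega>. (\<omega> i, \<omega> j)) = M \<Otimes>\<^sub>M M"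
proof (rule pair_measure_eqI[symmetric])
  interpret prob_space M by fact
  show "sigma_finite_measure M" by unfold_locales
  show "sigma_finite_measure M" by unfold_locales
  show "sets (M \<Otimes>\<^sub>M M) = sets (distr (PiM I (\<lambda>_. M)) (M \<Otimes>\<^sub>M M) (\<lambda>\<omega>. (\<omega> i, \<omega> j)))" by simp
  fix A B assume AB: "A \<in> sets M" "B \<in> sets M"
  have meas: "(\<lambda>\<omega>. (\<omega> i, \<omega> j)) \<in> measurable (PiM I (\<lambda>_. M)) (M \<Otimes>\<^sub>M M)"
    using ij by measurable
  define X where "X k = (if k = i then A else B)" for k
  have eq: "(\<lambda>\<omega>. (\<omega> i, \<omega> j)) -` (A \<times> B) \<inter> space (PiM I (\<lambda>_. M)) =
      prod_emb I (\<lambda>_. M) {i, j} (Pi\<^sub>E {i, j} X)"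
    using ij by (auto simp: prod_emb_def space_PiM PiE_iff X_def)
  have "emeasure (distr (PiM I (\<lambda>_. M)) (M \<Otimes>\<^sub>M M) (\<lambda>\<omega>. (\<omega> i, \<omega> j))) (A \<times> B) =
      emeasure (PiM I (\<lambda>_. M)) (prod_emb I (\<lambda>_. M) {i, j} (Pi\<^sub>E {i, j} X))"
    using AB meas by (subst emeasure_distr) (auto simp: eq)
  also have "\<dots> = (\<Prod>k\<in>{i,j}. emeasure M (X k))"
    using ij AB M by (intro emeasure_PiM_emb) (auto simp: X_def)
  also have "\<dots> = emeasure M A * emeasure M B" using ij by (simp add: X_def)
  finally show "emeasure M A * emeasure M B = emeasure (distr (PiM I (\<lambda>_. M)) (M \<Otimes>\<^sub>M M) (\<lambda>\<omega>. (\<omega> i, \<omega> j))) (A \<times> B)" by simp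
qed

lemma binom_mean:
  fixes f :: "'a \<Rightarrow> 'a \<Rightarrow> real"
  assumes M: "prob_space M" and fm[measurable]: "(\<lambda>z. f (fst z) (snd z)) \<in> borel_measurable (M \<Otimes>\<^sub>M M)"
    and fb: "\<And>x y. \<bar>f x y\<bar> \<le> c"
  shows "(\<integral>xs. (\<Sum>i<n. \<Sum>j\<in>{..<n} - {i}. f (xs i) (xs j)) \<partial>PiM {..<n} (\<lambda>_. M)) =
      real n * (real n - 1) * (\<integral>z. f (fst z) (snd z) \<partial>(M \<Otimes>\<^sub>M M))"
proof -
  let ?P = "PiM {..<n} (\<lambda>_. M)"
  interpret P: prob_space ?P using M by (intro prob_space_PiM) auto
  let ?J = "\<integral>z. f (fst z) (snd z) \<partial>(M \<Otimes>\<^sub>M M)"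
  have meas: "(\<lambda>\<omega>. (\<omega> i, \<omega> j)) \<in> measurable ?P (M \<Otimes>\<^sub>M M)" if "i < n" "j < n" for i j
    by (intro measurable_Pair measurable_component_singleton) (use that in auto)
  have fm': "(\<lambda>xs. f (xs i) (xs j)) \<in> borel_measurable ?P" if "i < n" "j < n" for i j
    using measurable_compose[OF meas[OF that] fm] by simp
  have int: "integrable ?P (\<lambda>xs. f (xs i) (xs j))" if "i < n" "j < n" for i j
    by (rule P.integrable_const_bound[where B=c]) (use fb fm' that in auto)
  have each: "(\<integral>xs. f (xs i) (xs j) \<partial>?P) = ?J" if "i < n" "j < n" "i \<noteq> j" for i j
  proof -
    have "?J = (\<integral>z. f (fst z) (snd z) \<partial>distr ?P (M \<Otimes>\<^sub>M M) (\<lambda>\<omega>. (\<omega> i, \<omega> j)))"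
      using pair_distr_PiM[OF M, of i "{..<n}" j] that by simp
    also have "\<dots> = (\<integral>xs. f (xs i) (xs j) \<partial>?P)"
      by (subst integral_distr[OF meas[OF that(1,2)] fm]) simp
    finally show ?thesis by simp
  qed
  have "(\<integral>xs. (\<Sum>i<n. \<Sum>j\<in>{..<n} - {i}. f (xs i) (xs j)) \<partial>?P) =
      (\<Sum>i<n. \<Sum>j\<in>{..<n} - {i}. (\<integral>xs. f (xs i) (xs j) \<partial>?P))"
  proof -
    have "(\<integral>xs. (\<Sum>i<n. \<Sum>j\<in>{..<n} - {i}. f (xs i) (xs j)) \<partial>?P) =
      (\<Sum>i<n. (\<integral>xs. (\<Sum>j\<in>{..<n} - {i}. f (xs i) (xs j)) \<partial>?P))"
      by (rule Bochner_Integration.integral_sum) (auto intro!: integrable_sum int)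
    also have "\<dots> = (\<Sum>i<n. \<Sum>j\<in>{..<n} - {i}. (\<integral>xs. f (xs i) (xs j) \<partial>?P))"
      by (intro sum.cong refl Bochner_Integration.integral_sum int) auto
    finally show ?thesis .
  qed
  also have "\<dots> = (\<Sum>i<n. \<Sum>j\<in>{..<n} - {i}. ?J)"
    using each by (intro sum.cong refl) auto
  also have "\<dots> = (\<Sum>i<n. (real n - 1) * ?J)"
    by (intro sum.cong refl) (auto simp: card_Diff_singleton of_nat_diff)
  also have "\<dots> = real n * (real n - 1) * ?J" by simp
  finally show ?thesis .
qed

lemma poisson_series:
  fixes t J :: real
  shows "(\<lambda>n. exp (- t) * t ^ n / fact n * (real n * (real n - 1) * J)) sums (t^2 * J)"
proof -
  define g where "g n = real n * (real n - 1) * t ^ n / fact n" for n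
  have "(\<lambda>n. t^2 * (t ^ n / fact n)) sums (t^2 * exp t)"
    using exp_converges[of t] by (intro sums_mult) (simp add: divide_inverse mult.commute)
  moreover have "g (Suc (Suc n)) = t^2 * (t ^ n / fact n)" for n
  proof -
    have f: "(fact (Suc (Suc n)) :: real) = ((real n + 2) * (real n + 1)) * fact n"
      by (simp add: algebra_simps)
    have a: "real (Suc (Suc n)) * (real (Suc (Suc n)) - 1) = (real n + 2) * (real n + 1)"
      by (simp add: algebra_simps)
    have "g (Suc (Suc n)) = ((real n + 2) * (real n + 1)) * t ^ Suc (Suc n) / (((real n + 2) * (real n + 1)) * fact n)"
      unfolding g_def a f by simp
    also have "\<dots> = t ^ Suc (Suc n) / fact n"
      by (rule mult_divide_mult_cancel_left) simp
    also have "\<dots> = t^2 * (t ^ n / fact n)" by (simp add: power2_eq_square)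
    finally show ?thesis .
  qed
  ultimately have "(\<lambda>n. g (Suc (Suc n))) sums (t^2 * exp t)" by simp
  then have h: "(\<lambda>n. g (Suc (Suc n))) sums (t^2 * exp t)" .
  have g01: "g 0 = 0" "g (Suc 0) = 0" by (simp_all add: g_def)
  have "(\<lambda>n. g (Suc n)) sums (t^2 * exp t + g (Suc 0))"
    using sums_Suc_iff[of "\<lambda>n. g (Suc n)" "t^2 * exp t"] h by blast
  then have "(\<lambda>n. g (Suc n)) sums (t^2 * exp t)" using g01 by simp
  then have "g sums (t^2 * exp t + g 0)"
    using sums_Suc_iff[of g "t^2 * exp t"] by blast
  then have "g sums (t^2 * exp t)" using g01 by simp
  then have "(\<lambda>n. (exp (- t) * J) * g n) sums ((exp (- t) * J) * (t^2 * exp t))"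
    by (rule sums_mult)
  moreover have "(exp (- t) * J) * (t^2 * exp t) = t^2 * J"
    by (simp add: exp_minus field_simps)
  moreover have "(\<lambda>n. (exp (- t) * J) * g n) = (\<lambda>n. exp (- t) * t ^ n / fact n * (real n * (real n - 1) * J))"
    by (simp add: g_def fun_eq_iff)
  ultimately show ?thesis by simp
qed




lemma Jest:
  fixes K B :: "'a::euclidean_space set" and A :: "real set"
  assumes Kb[measurable]: "K \<in> sets borel" and mK: "measure lborel K = 1" and eK: "emeasure lborel K = 1"
    and Dp: "D > 0" and geoD: "\<And>v. emeasure lborel (K - (+) v ` K) \<le> ennreal (D * norm v)"
    and Kbs: "\<And>v. K - (+) v ` K \<in> sets borel"
    and Bb[measurable]: "B \<in> sets borel" and BK: "B \<subseteq> K"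
    and Ab[measurable]: "A \<in> sets borel" and Aa: "A \<subseteq> {0..a}" and a: "a > 0"
  defines "J \<equiv> (\<integral>z. indicator B ((fst z + snd z) /\<^sub>R 2) * indicator A (norm (fst z - snd z))
       \<partial>(uniform_measure lborel K \<Otimes>\<^sub>M uniform_measure lborel K))"
    and "P \<equiv> (\<integral>z. indicator A (norm z) \<partial>(lborel::'a measure))"
    and "\<kappa> \<equiv> unit_ball_vol (real DIM('a))"
  shows "0 \<le> J" "J \<le> \<kappa> * a ^ DIM('a)"
    "\<bar>J - measure lborel B * P\<bar> \<le> D * a * (\<kappa> * a ^ DIM('a))"
proof -
  define U where "U = uniform_measure lborel K"
  define \<Gamma> where "\<Gamma> w m = (indicator A (norm w) * indicator B m * indicator K (m - w /\<^sub>R 2) * indicator K (m + w /\<^sub>R 2) :: ennreal)" for w m :: 'a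
  have \<Gamma>m[measurable]: "case_prod \<Gamma> \<in> borel_measurable (lborel \<Otimes>\<^sub>M lborel)"
    unfolding \<Gamma>_def by measurable
  define Jn where "Jn = (\<integral>\<^sup>+ w. \<integral>\<^sup>+ m. \<Gamma> w m \<partial>lborel \<partial>lborel)"
  define Pn where "Pn = (\<integral>\<^sup>+ w. indicator A (norm w) \<partial>(lborel::'a measure))"
  have sU: "sets (U \<Otimes>\<^sub>M U) = sets (lborel \<Otimes>\<^sub>M lborel)"
    by (intro sets_pair_measure_cong) (simp_all add: U_def)
  have fm: "(\<lambda>z. indicator B ((fst z + snd z) /\<^sub>R 2) * indicator A (norm (fst z - snd z)) :: real) \<in> borel_measurable (U \<Otimes>\<^sub>M U)"
    unfolding measurable_cong_sets[OF sU refl] by measurable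
  have J: "J = enn2real Jn"
  proof -
    have "J = enn2real (\<integral>\<^sup>+ z. ennreal (indicator B ((fst z + snd z) /\<^sub>R 2) * indicator A (norm (fst z - snd z))) \<partial>(U \<Otimes>\<^sub>M U))"
      unfolding J_def U_def[symmetric] by (rule integral_eq_nn_integral[OF fm]) auto
    also have "\<dots> = enn2real Jn"
      unfolding Jn_def \<Gamma>_def U_def by (subst Jrep) (use eK in auto)
    finally show ?thesis .
  qed
  have P: "P = enn2real Pn"
    unfolding P_def Pn_def by (subst integral_eq_nn_integral) (auto simp: ennreal_indicator)
  have Pn_le: "Pn \<le> ennreal (\<kappa> * a ^ DIM('a))"
  proof -
    have "Pn \<le> (\<integral>\<^sup>+ w. indicator (cball (0::'a) a) w \<partial>lborel)"
      unfolding Pn_def using Aa by (intro nn_integral_mono) (auto split: split_indicator)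
    also have "\<dots> = ennreal (\<kappa> * a ^ DIM('a))"
      using emeasure_cball[of a 0] a by (simp add: \<kappa>_def)
    finally show ?thesis .
  qed
  have eB: "emeasure lborel B = ennreal (measure lborel B)"
  proof (rule emeasure_eq_ennreal_measure)
    have "emeasure lborel B \<le> emeasure lborel K" using BK by (intro emeasure_mono) auto
    then show "emeasure lborel B \<noteq> \<top>" using eK by (auto simp: top_unique)
  qed
  have mB1: "measure lborel B \<le> 1"
  proof -
    have "emeasure lborel B \<le> emeasure lborel K" using BK by (intro emeasure_mono) auto
    then have "ennreal (measure lborel B) \<le> ennreal 1" using eB eK by simp
    then show ?thesis by (simp add: ennreal_le_iff del: ennreal_1)
  qed
  have up: "(\<integral>\<^sup>+ m. \<Gamma> w m \<partial>lborel) \<le> indicator A (norm w) * emeasure lborel B" for w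
  proof -
    have "(\<integral>\<^sup>+ m. \<Gamma> w m \<partial>lborel) \<le> (\<integral>\<^sup>+ m. indicator A (norm w) * indicator B m \<partial>lborel)"
      unfolding \<Gamma>_def by (intro nn_integral_mono) (auto split: split_indicator)
    also have "\<dots> = indicator A (norm w) * emeasure lborel B"
      by (subst nn_integral_cmult) auto
    finally show ?thesis .
  qed
  have low: "indicator A (norm w) * emeasure lborel B \<le> (\<integral>\<^sup>+ m. \<Gamma> w m \<partial>lborel) + indicator A (norm w) * ennreal (D * a)" for w
  proof (cases "norm w \<in> A")
    case False then show ?thesis by simp
  next
    case True
    then have wa: "norm w \<le> a" using Aa by auto
    define E where "E = {m. m - w /\<^sub>R 2 \<in> K \<and> m + w /\<^sub>R 2 \<in> K}"
    have Eb[measurable]: "E \<in> sets borel" unfolding E_def by measurable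
    have "(\<integral>\<^sup>+ m. \<Gamma> w m \<partial>lborel) = (\<integral>\<^sup>+ m. indicator (B \<inter> E) m \<partial>lborel)"
      unfolding \<Gamma>_def E_def using True by (intro nn_integral_cong) (auto split: split_indicator)
    also have "\<dots> = emeasure lborel (B \<inter> E)" by simp
    finally have G: "(\<integral>\<^sup>+ m. \<Gamma> w m \<partial>lborel) = emeasure lborel (B \<inter> E)" .
    define S1 where "S1 = K - (+) (w /\<^sub>R 2) ` K"
    define S2 where "S2 = K - (+) (- (w /\<^sub>R 2)) ` K"
    have S12[measurable]: "S1 \<in> sets borel" "S2 \<in> sets borel" unfolding S1_def S2_def by (rule Kbs)+
    have sub: "B - E \<subseteq> S1 \<union> S2"
    proof
      fix m assume m: "m \<in> B - E"
      then have mK: "m \<in> K" using BK by auto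
      show "m \<in> S1 \<union> S2"
      proof (cases "m - w /\<^sub>R 2 \<in> K")
        case True
        then have "m + w /\<^sub>R 2 \<notin> K" using m by (auto simp: E_def)
        then have "m \<notin> (+) (- (w /\<^sub>R 2)) ` K" by auto
        then show ?thesis using mK by (auto simp: S2_def)
      next
        case False
        then have "m \<notin> (+) (w /\<^sub>R 2) ` K" by auto
        then show ?thesis using mK by (auto simp: S1_def)
      qed
    qed
    have "emeasure lborel B \<le> emeasure lborel ((B \<inter> E) \<union> (B - E))"
      by (intro emeasure_mono) auto
    also have "\<dots> \<le> emeasure lborel (B \<inter> E) + emeasure lborel (B - E)"
      by (intro emeasure_subadditive) auto
    also have "emeasure lborel (B - E) \<le> emeasure lborel (S1 \<union> S2)"
      using sub by (intro emeasure_mono) auto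
    also have "\<dots> \<le> emeasure lborel S1 + emeasure lborel S2"
      by (intro emeasure_subadditive) auto
    also have "\<dots> \<le> ennreal (D * norm (w /\<^sub>R 2)) + ennreal (D * norm (- (w /\<^sub>R 2)))"
      unfolding S1_def S2_def by (intro add_mono geoD)
    also have "\<dots> = ennreal (D * norm w)"
      using Dp by (simp add: ennreal_plus[symmetric] del: ennreal_plus)
    also have "\<dots> \<le> ennreal (D * a)"
      using wa Dp by (intro ennreal_leI mult_left_mono) auto
    finally show ?thesis using G True by (simp add: add_mono)
  qed
  have Jn_up: "Jn \<le> emeasure lborel B * Pn"
  proof -
    have "Jn \<le> (\<integral>\<^sup>+ w. emeasure lborel B * indicator A (norm (w::'a)) \<partial>lborel)"
      unfolding Jn_def by (intro nn_integral_mono) (metis up mult.commute)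
    also have "\<dots> = emeasure lborel B * Pn"
      unfolding Pn_def by (subst nn_integral_cmult) auto
    finally show ?thesis .
  qed
  have Jn_low: "emeasure lborel B * Pn \<le> Jn + ennreal (D * a) * Pn"
  proof -
    have "emeasure lborel B * Pn = (\<integral>\<^sup>+ w. indicator A (norm (w::'a)) * emeasure lborel B \<partial>lborel)"
      unfolding Pn_def by (subst nn_integral_cmult[symmetric]) (auto simp: mult.commute)
    also have "\<dots> \<le> (\<integral>\<^sup>+ w. (\<integral>\<^sup>+ m. \<Gamma> w m \<partial>lborel) + indicator A (norm w) * ennreal (D * a) \<partial>lborel)"
      by (intro nn_integral_mono low)
    also have "\<dots> = Jn + (\<integral>\<^sup>+ w. indicator A (norm (w::'a)) * ennreal (D * a) \<partial>lborel)"
      unfolding Jn_def by (subst nn_integral_add) auto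
    also have "(\<integral>\<^sup>+ w. indicator A (norm (w::'a)) * ennreal (D * a) \<partial>lborel) = ennreal (D * a) * Pn"
      unfolding Pn_def by (subst nn_integral_cmult[symmetric]) (auto simp: mult.commute)
    finally show ?thesis .
  qed
  have kpos: "0 \<le> \<kappa> * a ^ DIM('a)" using a by (simp add: \<kappa>_def)
  define p where "p = enn2real Pn"
  have Pnf: "Pn \<noteq> \<top>" using Pn_le by (auto simp: top_unique)
  have p: "Pn = ennreal p" "p \<ge> 0" "p \<le> \<kappa> * a ^ DIM('a)"
  proof -
    show pe: "Pn = ennreal p" unfolding p_def using Pnf by (simp add: ennreal_enn2real_if)
    show "p \<ge> 0" by (simp add: p_def)
    show "p \<le> \<kappa> * a ^ DIM('a)" using Pn_le kpos unfolding pe by (simp add: ennreal_le_iff)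
  qed
  have Pp: "P = p" using P p by simp
  define j where "j = enn2real Jn"
  have j: "Jn = ennreal j" "j \<ge> 0"
  proof -
    have "Jn \<le> ennreal (measure lborel B * p)" using Jn_up eB p by (simp add: ennreal_mult)
    then have "Jn \<noteq> \<top>" by (auto simp: top_unique)
    then show "Jn = ennreal j" unfolding j_def by (simp add: ennreal_enn2real_if)
    show "j \<ge> 0" by (simp add: j_def)
  qed
  have Jj: "J = j" using J j by simp
  have b0: "measure lborel B \<ge> 0" by simp
  have j1: "j \<le> measure lborel B * p" using Jn_up eB p j by (simp add: ennreal_mult[symmetric])
  have j2: "measure lborel B * p \<le> j + D * a * p"
    using Jn_low eB p j Dp a by (simp add: ennreal_mult[symmetric] ennreal_plus[symmetric] del: ennreal_plus)
  show "0 \<le> J" using Jj j by simp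
  have "j \<le> p" using j1 mB1 p(2) by (meson mult_left_le_one_le b0 order.trans)
  then show "J \<le> \<kappa> * a ^ DIM('a)" using Jj p by simp
  have "\<bar>j - measure lborel B * p\<bar> \<le> D * a * p" using j1 j2 by simp
  also have "\<dots> \<le> D * a * (\<kappa> * a ^ DIM('a))" using p Dp a by (intro mult_left_mono) auto
  finally show "\<bar>J - measure lborel B * P\<bar> \<le> D * a * (\<kappa> * a ^ DIM('a))" using Jj Pp by simp
qed




lemma chi_bound:
  fixes t :: real assumes t: "t \<ge> 1"
  shows "\<bar>real (nat \<lceil>t\<rceil>) * (real (nat \<lceil>t\<rceil>) - 1) - t^2\<bar> \<le> t"
proof -
  define c where "c = real (nat \<lceil>t\<rceil>)"
  have c: "c = of_int \<lceil>t\<rceil>" using t by (simp add: c_def)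
  have c1: "t \<le> c" "c < t + 1" unfolding c by linarith+
  define u where "u = c - t"
  have u: "0 \<le> u" "u < 1" using c1 by (auto simp: u_def)
  have e: "c * (c - 1) - t^2 = t * (2 * u - 1) + u * (u - 1)"
    by (simp add: u_def power2_eq_square algebra_simps)
  have "t * (2 * u - 1) \<le> t" using t u by (simp add: mult_left_le)
  moreover have "u * (u - 1) \<le> 0" using u by (simp add: mult_nonneg_nonpos)
  moreover have "t * (2 * u - 1) + u * (u - 1) \<ge> - t"
  proof -
    have "t * (2 * u - 1) + u * (u - 1) = - t + u * (u - 1 + 2 * t)" by (simp add: algebra_simps)
    moreover have "u * (u - 1 + 2 * t) \<ge> 0" using u t by (intro mult_nonneg_nonneg) auto
    ultimately show ?thesis by simp
  qed
  ultimately show ?thesis unfolding c_def[symmetric] e by simp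
qed

theorem lemma7p14:
  fixes K :: "'a::euclidean_space set"
  assumes "compact K" and "convex K" and "measure lborel K = 1"
  shows "\<exists>C>0. \<forall>p t. t \<ge> 1 \<longrightarrow>
      (\<forall>B A a. B \<in> sets borel \<and> B \<subseteq> K \<and> A \<in> sets borel \<and> A \<subseteq> {0..a} \<and> a > 0 \<longrightarrow>
         \<bar>1/2 * pair_mean p K t
              (\<lambda>x y. indicator B ((x + y) /\<^sub>R 2) * indicator A (norm (x - y)))
          - measure lborel (ball (0::'a) 1) / 2 * measure lborel B * t^2 * real DIM('a)
              * (\<integral>r. indicator A r * r ^ (DIM('a) - 1) \<partial>lborel)\<bar>
         \<le> 2 * C * measure lborel (ball (0::'a) 1) * t^2 * (a ^ (DIM('a) + 1) + a ^ (2 * DIM('a)))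
           + measure lborel (ball (0::'a) 1) / 2 * t * a ^ DIM('a)) \<and>
      (\<forall>B u. B \<in> sets borel \<and> B \<subseteq> K \<and> u \<ge> 0 \<longrightarrow>
         chi_tilde p t * (\<integral>y. indicator K y *
             (\<integral>x. indicator K x * indicator B ((x + y) /\<^sub>R 2) * indicator {..u} (norm (x - y)) \<partial>lborel) ^ 2
           \<partial>lborel)
         \<le> 8 * t^3 * measure lborel (ball (0::'a) 1) ^ 2 * u ^ (2 * DIM('a)))"
proof -
  note cK = assms(1) and cvx = assms(2) and mK = assms(3)
  have Kb[measurable]: "K \<in> sets borel" using cK by (simp add: borel_compact)
  have eK: "emeasure lborel K = 1"
    using emeasure_compact_finite[OF cK] mK by (simp add: emeasure_eq_ennreal_measure)
  obtain D where Dp: "D > 0" and geoD: "\<And>v. emeasure lborel (K - (+) v ` K) \<le> ennreal (D * norm v)"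
    using geo[OF cK cvx mK] by blast
  have Kbs: "K - (+) v ` K \<in> sets borel" for v
    using cK by (intro sets.Diff Kb borel_compact compact_translation)
  define \<kappa> where "\<kappa> = unit_ball_vol (real DIM('a))"
  have kap: "measure lborel (ball (0::'a) 1) = \<kappa>"
    using content_ball[of 1 "0::'a"] by (simp add: \<kappa>_def)
  have kpos: "\<kappa> > 0" by (simp add: \<kappa>_def)
  define U where "U = uniform_measure lborel K"
  interpret U: prob_space U unfolding U_def using eK by (intro prob_space_uniform_measure) auto
  have sU: "sets (U \<Otimes>\<^sub>M U) = sets (lborel \<Otimes>\<^sub>M lborel)"
    by (intro sets_pair_measure_cong) (simp_all add: U_def)
  show ?thesis
  proof (rule exI[of _ "D / 4"], rule conjI, use Dp in simp, rule allI, rule allI, rule impI, rule conjI)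
    fix p :: point_process and t :: real
    assume t: "t \<ge> 1"
    define ch where "ch = (case p of Poisson_proc \<Rightarrow> t^2 | Binomial_proc \<Rightarrow> real (nat \<lceil>t\<rceil>) * (real (nat \<lceil>t\<rceil>) - 1))"
    have chi: "\<bar>ch - t^2\<bar> \<le> t"
      using chi_bound[OF t] t by (cases p) (auto simp: ch_def)
    {
      fix B :: "'a set" and A :: "real set" and a :: real
      assume H: "B \<in> sets borel \<and> B \<subseteq> K \<and> A \<in> sets borel \<and> A \<subseteq> {0..a} \<and> a > 0"
      then have Bb[measurable]: "B \<in> sets borel" and BK: "B \<subseteq> K" and Ab[measurable]: "A \<in> sets borel"
        and Aa: "A \<subseteq> {0..a}" and a: "a > 0" by auto
      define f where "f x y = (indicator B ((x + y) /\<^sub>R 2) * indicator A (norm (x - y)) :: real)" for x y :: 'a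
      define J :: real where "J = (\<integral>z. indicator B ((fst z + snd z) /\<^sub>R 2) * indicator A (norm (fst z - snd z))
         \<partial>(uniform_measure lborel K \<Otimes>\<^sub>M uniform_measure lborel K))"
      define P :: real where "P = (\<integral>z. indicator A (norm z) \<partial>(lborel::'a measure))"
      define R :: real where "R = (\<integral>r. indicator A r * r ^ (DIM('a) - 1) \<partial>lborel)"
      define b where "b = measure lborel B"
      have JE: "0 \<le> J" "J \<le> \<kappa> * a ^ DIM('a)" "\<bar>J - b * P\<bar> \<le> D * a * (\<kappa> * a ^ DIM('a))"
        using Jest[OF Kb mK eK Dp geoD Kbs Bb BK Ab Aa a] unfolding J_def P_def b_def \<kappa>_def by auto
      have fm: "(\<lambda>z. f (fst z) (snd z)) \<in> borel_measurable (U \<Otimes>\<^sub>M U)"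
        unfolding measurable_cong_sets[OF sU refl] f_def by measurable
      have binom: "binomial_pair_mean K n f = real n * (real n - 1) * J" for n
      proof -
        have Jf: "J = (\<integral>z. f (fst z) (snd z) \<partial>(U \<Otimes>\<^sub>M U))" unfolding J_def f_def U_def ..
        show ?thesis
          unfolding binomial_pair_mean_def Jf U_def[symmetric]
          by (rule binom_mean[OF U.prob_space_axioms fm, where c=1]) (auto simp: f_def split: split_indicator)
      qed
      have pm: "pair_mean p K t f = ch * J"
      proof (cases p)
        case Poisson_proc
        have "(\<lambda>n. exp (- t) * t ^ n / fact n * binomial_pair_mean K n f) sums (t^2 * J)"
          unfolding binom by (rule poisson_series)
        then show ?thesis using Poisson_proc
          by (simp add: pair_mean_def poisson_pair_mean_def ch_def sums_unique[symmetric])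
      next
        case Binomial_proc
        then show ?thesis by (simp add: pair_mean_def ch_def binom)
      qed
      have PR: "P = \<kappa> * real DIM('a) * R"
      proof -
        have "P = enn2real (\<integral>\<^sup>+ z. indicator A (norm z) \<partial>(lborel::'a measure))"
          unfolding P_def by (subst integral_eq_nn_integral) (auto simp: ennreal_indicator)
        also have "\<dots> = enn2real (ennreal (\<kappa> * DIM('a)) * (\<integral>\<^sup>+ r. ennreal (indicator A r * r ^ (DIM('a) - 1)) \<partial>lborel))"
          using polar[OF Ab Aa, where 'a='a] a by (simp add: \<kappa>_def)
        also have "\<dots> = \<kappa> * DIM('a) * enn2real (\<integral>\<^sup>+ r. ennreal (indicator A r * r ^ (DIM('a) - 1)) \<partial>lborel)"
          using kpos by (simp add: enn2real_mult)
        also have "enn2real (\<integral>\<^sup>+ r. ennreal (indicator A r * r ^ (DIM('a) - 1)) \<partial>lborel) = R"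
          unfolding R_def using Aa by (subst integral_eq_nn_integral) (auto split: split_indicator intro!: AE_I2 zero_le_power)
        finally show ?thesis .
      qed
      have b01: "0 \<le> b" by (simp add: b_def)
      have "\<bar>ch * J - t^2 * (b * P)\<bar> \<le> \<bar>ch - t^2\<bar> * J + t^2 * \<bar>J - b * P\<bar>"
      proof -
        have "ch * J - t^2 * (b * P) = (ch - t^2) * J + t^2 * (J - b * P)" by (simp add: algebra_simps)
        then have "\<bar>ch * J - t^2 * (b * P)\<bar> \<le> \<bar>(ch - t^2) * J\<bar> + \<bar>t^2 * (J - b * P)\<bar>" by simp
        then show ?thesis using JE(1) by (simp add: abs_mult)
      qed
      also have "\<dots> \<le> t * (\<kappa> * a ^ DIM('a)) + t^2 * (D * a * (\<kappa> * a ^ DIM('a)))"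
        using chi JE t by (intro add_mono mult_mono mult_left_mono) auto
      also have "\<dots> \<le> 2 * (2 * (D / 4) * \<kappa> * t^2 * (a ^ (DIM('a) + 1) + a ^ (2 * DIM('a)))
           + \<kappa> / 2 * t * a ^ DIM('a))"
      proof -
        have "t^2 * (D * a * (\<kappa> * a ^ DIM('a))) = D * \<kappa> * t^2 * a ^ (DIM('a) + 1)" by (simp add: algebra_simps)
        also have "\<dots> \<le> D * \<kappa> * t^2 * (a ^ (DIM('a) + 1) + a ^ (2 * DIM('a)))"
          using Dp kpos a by (intro mult_left_mono) auto
        finally show ?thesis by (simp add: algebra_simps)
      qed
      finally have main: "\<bar>ch * J - t^2 * (b * P)\<bar> \<le> 2 * (2 * (D / 4) * \<kappa> * t^2 * (a ^ (DIM('a) + 1) + a ^ (2 * DIM('a)))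
           + \<kappa> / 2 * t * a ^ DIM('a))" .
      have eq: "1/2 * pair_mean p K t (\<lambda>x y. indicator B ((x + y) /\<^sub>R 2) * indicator A (norm (x - y)))
          - measure lborel (ball (0::'a) 1) / 2 * measure lborel B * t^2 * real DIM('a) * R
          = (ch * J - t^2 * (b * P)) / 2"
        using pm unfolding f_def[abs_def] kap PR b_def by (simp add: algebra_simps)
      have "\<bar>1/2 * pair_mean p K t (\<lambda>x y. indicator B ((x + y) /\<^sub>R 2) * indicator A (norm (x - y)))
          - measure lborel (ball (0::'a) 1) / 2 * measure lborel B * t^2 * real DIM('a) * R\<bar>
         \<le> 2 * (D / 4) * measure lborel (ball (0::'a) 1) * t^2 * (a ^ (DIM('a) + 1) + a ^ (2 * DIM('a)))
           + measure lborel (ball (0::'a) 1) / 2 * t * a ^ DIM('a)"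
        unfolding eq using main by (simp add: kap)
      then have "\<bar>1/2 * pair_mean p K t (\<lambda>x y. indicator B ((x + y) /\<^sub>R 2) * indicator A (norm (x - y)))
          - measure lborel (ball (0::'a) 1) / 2 * measure lborel B * t^2 * real DIM('a)
              * (\<integral>r. indicator A r * r ^ (DIM('a) - 1) \<partial>lborel)\<bar>
         \<le> 2 * (D / 4) * measure lborel (ball (0::'a) 1) * t^2 * (a ^ (DIM('a) + 1) + a ^ (2 * DIM('a)))
           + measure lborel (ball (0::'a) 1) / 2 * t * a ^ DIM('a)"
        unfolding R_def .
    }
    then show "\<forall>B A a. B \<in> sets borel \<and> B \<subseteq> K \<and> A \<in> sets borel \<and> A \<subseteq> {0..a} \<and> a > 0 \<longrightarrow>
         \<bar>1/2 * pair_mean p K t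
              (\<lambda>x y. indicator B ((x + y) /\<^sub>R 2) * indicator A (norm (x - y)))
          - measure lborel (ball (0::'a) 1) / 2 * measure lborel B * t^2 * real DIM('a)
              * (\<integral>r. indicator A r * r ^ (DIM('a) - 1) \<partial>lborel)\<bar>
         \<le> 2 * (D / 4) * measure lborel (ball (0::'a) 1) * t^2 * (a ^ (DIM('a) + 1) + a ^ (2 * DIM('a)))
           + measure lborel (ball (0::'a) 1) / 2 * t * a ^ DIM('a)" by blast
  next
    fix p :: point_process and t :: real
    assume t: "t \<ge> 1"
    {
      fix B :: "'a set" and u :: real
      assume H: "B \<in> sets borel \<and> B \<subseteq> K \<and> u \<ge> (0::real)"
      then have Bb[measurable]: "B \<in> sets borel" and u: "u \<ge> 0" by auto
      define h :: "'a \<Rightarrow> real" where "h y = (\<integral>x. indicator K x * indicator B ((x + y) /\<^sub>R 2) * indicator {..u} (norm (x - y)) \<partial>lborel)" for y :: 'a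
      have h0: "0 \<le> h y" for y unfolding h_def by (intro Bochner_Integration.integral_nonneg) auto
      have h1: "h y \<le> \<kappa> * u ^ DIM('a)" for y
      proof (cases "integrable lborel (\<lambda>x. indicator K x * indicator B ((x + y) /\<^sub>R 2) * indicator {..u} (norm (x - y)) :: real)")
        case True
        have ic: "integrable lborel (\<lambda>x. indicator (cball y u) x :: real)"
          using emeasure_compact_finite[of "cball y u"] by (intro integrable_real_indicator) auto
        have "h y \<le> (\<integral>x. indicator (cball y u) x \<partial>lborel)"
          unfolding h_def using True ic
          by (intro Bochner_Integration.integral_mono) (auto simp: dist_norm norm_minus_commute split: split_indicator)
        also have "\<dots> = \<kappa> * u ^ DIM('a)"
          using content_cball[OF u, of y] by (simp add: \<kappa>_def)
        finally show ?thesis .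
      next
        case False
        then have "h y = 0" unfolding h_def by (rule not_integrable_integral_eq)
        then show ?thesis using kpos u by simp
      qed
      have I: "(\<integral>y. indicator K y * h y ^ 2 \<partial>lborel) \<le> \<kappa>^2 * u ^ (2 * DIM('a))"
      proof (cases "integrable lborel (\<lambda>y. indicator K y * h y ^ 2)")
        case True
        have ic: "integrable lborel (\<lambda>y. (\<kappa> * u ^ DIM('a))^2 * indicator K y :: real)"
          using emeasure_compact_finite[OF cK] by (intro integrable_mult_right integrable_real_indicator) auto
        have "(\<integral>y. indicator K y * h y ^ 2 \<partial>lborel) \<le> (\<integral>y. (\<kappa> * u ^ DIM('a))^2 * indicator K y \<partial>lborel)"
          using True ic
        proof (intro Bochner_Integration.integral_mono)
          fix y
          have "h y ^ 2 \<le> (\<kappa> * u ^ DIM('a))^2" using h0 h1 by (intro power_mono)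
          then show "indicator K y * h y ^ 2 \<le> (\<kappa> * u ^ DIM('a))^2 * indicator K y"
            by (simp split: split_indicator)
        qed
        also have "\<dots> = (\<kappa> * u ^ DIM('a))^2" using mK by simp
        also have "\<dots> = \<kappa>^2 * u ^ (2 * DIM('a))" by (simp add: power_mult_distrib power_mult[symmetric] mult.commute)
        finally show ?thesis .
      next
        case False
        then show ?thesis by (simp add: not_integrable_integral_eq)
      qed
      have I0: "0 \<le> (\<integral>y. indicator K y * h y ^ 2 \<partial>lborel)" by (intro Bochner_Integration.integral_nonneg) auto
      have ct: "chi_tilde p t \<le> 8 * t^3" "0 \<le> chi_tilde p t"
      proof -
        have c: "real (nat \<lceil>t\<rceil>) \<le> 2 * t" "0 \<le> real (nat \<lceil>t\<rceil>)" using t by linarith+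
        have "real (nat \<lceil>t\<rceil>) ^ 3 \<le> (2 * t) ^ 3" using c by (intro power_mono)
        then show "chi_tilde p t \<le> 8 * t^3" "0 \<le> chi_tilde p t" using t
          by (cases p; simp add: chi_tilde_def power_mult_distrib)+
      qed
      have "chi_tilde p t * (\<integral>y. indicator K y * h y ^ 2 \<partial>lborel) \<le> (8 * t^3) * (\<kappa>^2 * u ^ (2 * DIM('a)))"
        using ct I I0 t by (intro mult_mono) auto
      then have "chi_tilde p t * (\<integral>y. indicator K y *
             (\<integral>x. indicator K x * indicator B ((x + y) /\<^sub>R 2) * indicator {..u} (norm (x - y)) \<partial>lborel) ^ 2
           \<partial>lborel)
         \<le> 8 * t^3 * measure lborel (ball (0::'a) 1) ^ 2 * u ^ (2 * DIM('a))"
        unfolding h_def kap by (simp add: mult.assoc)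
    }
    then show "\<forall>B u. B \<in> sets borel \<and> B \<subseteq> K \<and> u \<ge> 0 \<longrightarrow>
         chi_tilde p t * (\<integral>y. indicator K y *
             (\<integral>x. indicator K x * indicator B ((x + y) /\<^sub>R 2) * indicator {..u} (norm (x - y)) \<partial>lborel) ^ 2
           \<partial>lborel)
         \<le> 8 * t^3 * measure lborel (ball (0::'a) 1) ^ 2 * u ^ (2 * DIM('a))" by blast
  qed
qed


end
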